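(* Let $b:X\times X\to[0,\infty)$ on a countable set $X$ be such that $(b,0)$ is a locally finite, connected graph, and let $G$ be a nilpotent group acting cocompactly on $X$ such that $H_{b,0}$ is $G$-invariant. Then every bounded harmonic function (i.e. bounded $f$ with $H_{b,0}f=0$) is constant.
   Context: A graph over $X$ is $(b,c)$ with $\sum_yb(x,y)<\infty$ for all $x$ ($b$ need not be symmetric); here $c=0$. Locally finite: each $x$ has finitely many $y$ with $b(x,y)>0$; connected: any $x,z$ are joined by a finite sequence $y_1,\dots,y_n$ with $b(y_i,y_{i+1})>0$. $H_{b,0}f(x)=\sum_yb(x,y)(f(x)-f(y))$. $T_gf(x)=f(g^{-1}x)$; cocompact: $GV=X$ for some finite $V$; $H$ is $G$-invariant if $T_g$ preserves its domain $\{f:\sum_yb(x,y)|f(y)|<\infty\ \forall x\}$ and $HT_g=T_gH$ for all $g$. *)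

theory Defs
  imports "HOL-Analysis.Analysis" "HOL-Algebra.Algebra"
begin

fun lower_central :: "('g, 'b) monoid_scheme \<Rightarrow> nat \<Rightarrow> 'g set" where
  "lower_central G 0 = carrier G"
| "lower_central G (Suc n) = generate G
     (\<Union>a \<in> lower_central G n. \<Union>c \<in> carrier G.
        { a \<otimes>\<^bsub>G\<^esub> c \<otimes>\<^bsub>G\<^esub> inv\<^bsub>G\<^esub> a \<otimes>\<^bsub>G\<^esub> inv\<^bsub>G\<^esub> c })"

definition nilpotent_group :: "('g, 'b) monoid_scheme \<Rightarrow> bool" where
  "nilpotent_group G \<longleftrightarrow> group G \<and> (\<exists>n. lower_central G n = {\<one>\<^bsub>G\<^esub>})"

definition locally_finite_graph :: "('x \<Rightarrow> 'x \<Rightarrow> real) \<Rightarrow> bool" where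
  "locally_finite_graph b \<longleftrightarrow> (\<forall>x. finite {y. b x y > 0})"

definition connected_graph :: "('x \<Rightarrow> 'x \<Rightarrow> real) \<Rightarrow> bool" where
  "connected_graph b \<longleftrightarrow> (\<forall>x z. (\<lambda>u v. b u v > 0)\<^sup>*\<^sup>* x z)"

text \<open>Graph condition: b nonnegative with finite row sums (c = 0).\<close>
definition is_graph :: "('x \<Rightarrow> 'x \<Rightarrow> real) \<Rightarrow> bool" where
  "is_graph b \<longleftrightarrow> (\<forall>x y. b x y \<ge> 0) \<and> (\<forall>x. (b x) summable_on UNIV)"

definition H_dom :: "('x \<Rightarrow> 'x \<Rightarrow> real) \<Rightarrow> ('x \<Rightarrow> real) set" where
  "H_dom b = {f. \<forall>x. (\<lambda>y. b x y * \<bar>f y\<bar>) summable_on UNIV}"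

definition H_op :: "('x \<Rightarrow> 'x \<Rightarrow> real) \<Rightarrow> ('x \<Rightarrow> real) \<Rightarrow> 'x \<Rightarrow> real" where
  "H_op b f x = (\<Sum>\<^sub>\<infinity>y. b x y * (f x - f y))"

definition T_act :: "('g, 'c) monoid_scheme \<Rightarrow> ('g \<Rightarrow> 'x \<Rightarrow> 'x) \<Rightarrow> 'g \<Rightarrow> ('x \<Rightarrow> real) \<Rightarrow> 'x \<Rightarrow> real" where
  "T_act G \<phi> g f x = f (\<phi> (inv\<^bsub>G\<^esub> g) x)"

definition H_invariant :: "('g, 'c) monoid_scheme \<Rightarrow> ('g \<Rightarrow> 'x \<Rightarrow> 'x) \<Rightarrow> ('x \<Rightarrow> 'x \<Rightarrow> real) \<Rightarrow> bool" where
  "H_invariant G \<phi> b \<longleftrightarrow> (\<forall>g \<in> carrier G. \<forall>f \<in> H_dom b.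
      T_act G \<phi> g f \<in> H_dom b \<and> H_op b (T_act G \<phi> g f) = T_act G \<phi> g (H_op b f))"

definition cocompact :: "('g, 'c) monoid_scheme \<Rightarrow> ('g \<Rightarrow> 'x \<Rightarrow> 'x) \<Rightarrow> bool" where
  "cocompact G \<phi> \<longleftrightarrow> (\<exists>V. finite V \<and> (\<Union>g \<in> carrier G. \<phi> g ` V) = UNIV)"

end

theory Submission
  imports Defs
begin

definition harm :: "('x \<Rightarrow> 'x \<Rightarrow> real) \<Rightarrow> ('x \<Rightarrow> real) \<Rightarrow> bool" where
  "harm b f \<longleftrightarrow> (\<forall>x. (\<Sum>y\<in>{y. 0 < b x y}. b x y * (f x - f y)) = 0)"

lemma harm_diff:
  assumes "harm b f" "harm b g" shows "harm b (\<lambda>x. f x - g x)"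
proof -
  have "(\<Sum>y\<in>{y. 0 < b x y}. b x y * ((f x - g x) - (f y - g y)))
     = (\<Sum>y\<in>{y. 0 < b x y}. b x y * (f x - f y)) - (\<Sum>y\<in>{y. 0 < b x y}. b x y * (g x - g y))" for x
    by (simp add: sum_subtractf[symmetric] algebra_simps)
  then show ?thesis using assms unfolding harm_def by simp
qed

lemma harm_scale:
  assumes "harm b f" shows "harm b (\<lambda>x. c * f x)"
proof -
  have "(\<Sum>y\<in>{y. 0 < b x y}. b x y * (c * f x - c * f y))
     = c * (\<Sum>y\<in>{y. 0 < b x y}. b x y * (f x - f y))" for x
    by (simp add: sum_distrib_left algebra_simps)
  then show ?thesis using assms unfolding harm_def by simp
qed

lemma prop1:
  assumes gr: "is_graph b" and lf: "locally_finite_graph b"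
    and h: "harm b h" and le: "\<forall>y. h y \<le> S" and hu: "h u \<ge> S - e" and e: "e \<ge> 0"
    and buw: "b u w > 0"
  shows "h w \<ge> S - ((\<Sum>y\<in>{y. 0 < b u y}. b u y) / b u w) * e"
proof -
  let ?A = "{y. 0 < b u y}"
  have fin: "finite ?A" using lf unfolding locally_finite_graph_def by auto
  have "(\<Sum>y\<in>?A. b u y * (S - h y)) = (\<Sum>y\<in>?A. b u y * (S - h u)) + (\<Sum>y\<in>?A. b u y * (h u - h y))"
    by (simp add: sum.distrib[symmetric] algebra_simps)
  also have "(\<Sum>y\<in>?A. b u y * (h u - h y)) = 0" using h unfolding harm_def by auto
  also have "(\<Sum>y\<in>?A. b u y * (S - h u)) = (\<Sum>y\<in>?A. b u y) * (S - h u)"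
    by (simp add: sum_distrib_right)
  finally have eq: "(\<Sum>y\<in>?A. b u y * (S - h y)) = (\<Sum>y\<in>?A. b u y) * (S - h u)" by simp
  have D0: "(\<Sum>y\<in>?A. b u y) \<ge> 0" by (rule sum_nonneg) auto
  have "b u w * (S - h w) \<le> (\<Sum>y\<in>?A. b u y * (S - h y))"
    by (rule member_le_sum[where f="\<lambda>y. b u y * (S - h y)"]) (use fin buw le in auto)
  also have "\<dots> \<le> (\<Sum>y\<in>?A. b u y) * e" unfolding eq
    using D0 hu by (intro mult_left_mono) auto
  finally have "b u w * (S - h w) \<le> (\<Sum>y\<in>?A. b u y) * e" .
  then have "S - h w \<le> ((\<Sum>y\<in>?A. b u y) * e) / b u w" using buw
    by (simp add: pos_le_divide_eq mult.commute)
  then show ?thesis by simp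
qed

lemma path_const:
  assumes gr: "is_graph b" and lf: "locally_finite_graph b"
    and p: "(\<lambda>u v. b u v > 0)\<^sup>*\<^sup>* v w"
  shows "\<exists>K\<ge>1. \<forall>h. harm b h \<longrightarrow> (\<forall>y. h y \<le> S) \<longrightarrow>
           (\<forall>e\<ge>0. h v \<ge> S - e \<longrightarrow> h w \<ge> S - K * e)"
  using p
proof (induction rule: rtranclp_induct)
  case base
  show ?case by (rule exI[of _ 1]) auto
next
  case (step u w)
  then obtain K where K: "K \<ge> 1" and KP: "\<forall>h. harm b h \<longrightarrow> (\<forall>y. h y \<le> S) \<longrightarrow>
           (\<forall>e\<ge>0. h v \<ge> S - e \<longrightarrow> h u \<ge> S - K * e)" by blast
  define D where "D = max 1 ((\<Sum>y\<in>{y. 0 < b u y}. b u y) / b u w)"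
  show ?case
  proof (rule exI[of _ "D * K"], intro conjI allI impI)
    have D1: "D \<ge> 1" unfolding D_def by simp
    have "1 * 1 \<le> D * K" by (rule mult_mono) (use D1 K in auto)
    then show "1 \<le> D * K" by simp
  next
    fix h e assume h: "harm b h" and le: "\<forall>y. h y \<le> S" and e: "0 \<le> e" and hv: "S - e \<le> h v"
    have "h u \<ge> S - K * e" using KP h le e hv by blast
    then have "h w \<ge> S - ((\<Sum>y\<in>{y. 0 < b u y}. b u y) / b u w) * (K * e)"
      using prop1[OF gr lf h le _ _ step(2)] K e by auto
    moreover have "((\<Sum>y\<in>{y. 0 < b u y}. b u y) / b u w) * (K * e) \<le> D * (K * e)"
      unfolding D_def using K e by (intro mult_right_mono) auto
    ultimately show "S - D * K * e \<le> h w" by (simp add: mult.assoc)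
  qed
qed

locale setting =
  fixes b :: "'x \<Rightarrow> 'x \<Rightarrow> real" and G :: "('g, 'c) monoid_scheme" and \<phi> :: "'g \<Rightarrow> 'x \<Rightarrow> 'x"
  assumes gr: "is_graph b" and lf: "locally_finite_graph b" and conn: "connected_graph b"
    and grp: "group G" and act: "group_action G UNIV \<phi>" and cc: "cocompact G \<phi>"
    and inv: "H_invariant G \<phi> b"
begin

definition cls where "cls = {f. harm b f \<and> (\<forall>x. \<bar>f x\<bar> \<le> 1)}"

lemma Hop_fin: "H_op b f x = (\<Sum>y\<in>{y. 0 < b x y}. b x y * (f x - f y))"
proof -
  have fin: "finite {y. 0 < b x y}" using lf unfolding locally_finite_graph_def by auto
  have nn: "b x y \<ge> 0" for y using gr unfolding is_graph_def by auto
  have "H_op b f x = infsum (\<lambda>y. b x y * (f x - f y)) {y. 0 < b x y}"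
    unfolding H_op_def
    by (rule infsum_cong_neutral) (use nn in \<open>auto simp: order.order_iff_strict\<close>)
  then show ?thesis using fin by simp
qed

lemma Hdom: "f \<in> H_dom b"
proof -
  have nn: "b x y \<ge> 0" for x y using gr unfolding is_graph_def by auto
  have "(\<lambda>y. b x y * \<bar>f y\<bar>) summable_on UNIV" for x
  proof -
    have fin: "finite {y. 0 < b x y}" using lf unfolding locally_finite_graph_def by auto
    have "(\<lambda>y. b x y * \<bar>f y\<bar>) summable_on {y. 0 < b x y}" using fin by simp
    then show ?thesis
      by (subst summable_on_cong_neutral[where T="{y. 0 < b x y}" and g="\<lambda>y. b x y * \<bar>f y\<bar>"])
         (use nn in \<open>auto simp: order.order_iff_strict\<close>)
  qed
  then show ?thesis unfolding H_dom_def by auto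
qed

lemma harm_iff: "harm b f \<longleftrightarrow> H_op b f = (\<lambda>x. 0)"
  unfolding harm_def fun_eq_iff Hop_fin by simp

lemma phi_one: "\<phi> \<one>\<^bsub>G\<^esub> x = x"
  using group_action.id_eq_one[OF act] by (metis UNIV_I restrict_apply')

lemma comp: "g1 \<in> carrier G \<Longrightarrow> g2 \<in> carrier G \<Longrightarrow> \<phi> (g1 \<otimes>\<^bsub>G\<^esub> g2) x = \<phi> g1 (\<phi> g2 x)"
  using group_action.composition_rule[OF act] by blast

lemma harm_comp:
  assumes "harm b f" "g \<in> carrier G" shows "harm b (\<lambda>x. f (\<phi> g x))"
proof -
  have ig: "inv\<^bsub>G\<^esub> g \<in> carrier G" using assms grp by simp
  have T: "T_act G \<phi> (inv\<^bsub>G\<^esub> g) f = (\<lambda>x. f (\<phi> g x))"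
    unfolding T_act_def using assms grp by (simp add: group.inv_inv)
  have "H_op b (T_act G \<phi> (inv\<^bsub>G\<^esub> g) f) = T_act G \<phi> (inv\<^bsub>G\<^esub> g) (H_op b f)"
    using inv ig Hdom unfolding H_invariant_def by blast
  also have "\<dots> = (\<lambda>x. 0)" using assms(1) unfolding harm_iff T_act_def by simp
  finally show ?thesis unfolding harm_iff T .
qed

lemma cls_comp: "f \<in> cls \<Longrightarrow> g \<in> carrier G \<Longrightarrow> (\<lambda>x. f (\<phi> g x)) \<in> cls"
  unfolding cls_def using harm_comp by auto

lemma cls_neg: "f \<in> cls \<Longrightarrow> (\<lambda>x. - f x) \<in> cls"
  unfolding cls_def using harm_scale[of b f "-1"] by auto


lemma cls_upper:
  assumes "f \<in> cls" shows "f y - f x \<le> 2"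
proof -
  have "\<bar>f y\<bar> \<le> 1" "\<bar>f x\<bar> \<le> 1" using assms unfolding cls_def by auto
  then show ?thesis by linarith
qed

lemma step_le:
  assumes N: "\<forall>f\<in>cls. \<forall>n\<in>N. \<forall>x. f (\<phi> n x) = f x"
    and z: "z \<in> carrier G"
    and com: "\<forall>g\<in>carrier G. \<exists>n\<in>N. \<forall>x. \<phi> z (\<phi> g x) = \<phi> g (\<phi> z (\<phi> n x))"
  shows "\<forall>f\<in>cls. \<forall>x. f (\<phi> z x) - f x \<le> 0"
proof -
  define Hs where "Hs = {f (\<phi> z x) - f x | f x. f \<in> cls}"
  have bdd: "bdd_above Hs" unfolding Hs_def bdd_above_def using cls_upper by blast
  have z0: "(\<lambda>_. 0) \<in> cls" unfolding cls_def harm_def by simp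
  have ne: "Hs \<noteq> {}" unfolding Hs_def using z0 by blast
  define S where "S = Sup Hs"
  have up: "f (\<phi> z x) - f x \<le> S" if "f \<in> cls" for f x
    unfolding S_def by (rule cSup_upper[OF _ bdd]) (use that Hs_def in blast)
  have "S \<le> 0"
  proof (rule ccontr)
    assume "\<not> S \<le> 0" then have Spos: "S > 0" by simp
    obtain V where Vfin: "finite V" and VU: "(\<Union>g \<in> carrier G. \<phi> g ` V) = UNIV"
      using cc unfolding cocompact_def by blast
    have "\<forall>v\<in>V. \<exists>K\<ge>1. \<forall>h. harm b h \<longrightarrow> (\<forall>y. h y \<le> S) \<longrightarrow>
           (\<forall>e\<ge>0. h v \<ge> S - e \<longrightarrow> h (\<phi> z v) \<ge> S - K * e)"
      using path_const[OF gr lf] conn unfolding connected_graph_def by blast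
    then have "\<exists>Kf. \<forall>v\<in>V. Kf v \<ge> 1 \<and> (\<forall>h. harm b h \<longrightarrow> (\<forall>y. h y \<le> S) \<longrightarrow>
           (\<forall>e\<ge>0. h v \<ge> S - e \<longrightarrow> h (\<phi> z v) \<ge> S - Kf v * e))"
      by (rule bchoice)
    then obtain Kf where Kf: "\<forall>v\<in>V. Kf v \<ge> 1 \<and> (\<forall>h. harm b h \<longrightarrow> (\<forall>y. h y \<le> S) \<longrightarrow>
           (\<forall>e\<ge>0. h v \<ge> S - e \<longrightarrow> h (\<phi> z v) \<ge> S - Kf v * e))"
      by blast
    have Kf0: "\<forall>v\<in>V. Kf v \<ge> 0" using Kf by force
    define K where "K = 1 + (\<Sum>v\<in>V. Kf v)"
    have K1: "K \<ge> 1" unfolding K_def using Kf0 sum_nonneg[of V Kf] by simp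
    have KV: "Kf v \<le> K" if "v \<in> V" for v
    proof -
      have "Kf v \<le> (\<Sum>v\<in>V. Kf v)"
        by (rule member_le_sum) (use that Vfin Kf0 in auto)
      then show ?thesis unfolding K_def by simp
    qed
    have KP: "h (\<phi> z v) \<ge> S - K * e"
      if "v \<in> V" "harm b h" "\<forall>y. h y \<le> S" "e \<ge> 0" "h v \<ge> S - e" for v h e
    proof -
      have "h (\<phi> z v) \<ge> S - Kf v * e" using Kf that by blast
      moreover have "Kf v * e \<le> K * e" using KV[OF that(1)] that(4) by (rule mult_right_mono)
      ultimately show ?thesis by simp
    qed
    obtain n :: nat where n: "real n * S > 4"
      using ex_less_of_nat_mult[OF Spos, of 4] by blast
    define e where "e = S / (2 * K ^ n)"
    have Kn: "K ^ n \<ge> 1" using K1 by simp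
    have epos: "e > 0" unfolding e_def using Spos Kn by simp
    have "S - e < Sup Hs" using epos S_def by simp
    then obtain t where "t \<in> Hs" "S - e < t" using less_cSup_iff[OF ne bdd] by blast
    then obtain f x where f: "f \<in> cls" and fx: "f (\<phi> z x) - f x > S - e"
      unfolding Hs_def by blast
    obtain g v where g: "g \<in> carrier G" and v: "v \<in> V" and xv: "x = \<phi> g v"
    proof -
      have "x \<in> (\<Union>g \<in> carrier G. \<phi> g ` V)" using VU by simp
      then show ?thesis using that by blast
    qed
    define f' where "f' = (\<lambda>y. f (\<phi> g y))"
    have f'c: "f' \<in> cls" unfolding f'_def using cls_comp[OF f g] .
    obtain m where m: "m \<in> N" and mx: "\<forall>y. \<phi> z (\<phi> g y) = \<phi> g (\<phi> z (\<phi> m y))"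
      using com g by blast
    have f'z: "(\<lambda>y. f' (\<phi> z y)) \<in> cls" using cls_comp[OF f'c z] .
    have "f (\<phi> z x) = f' (\<phi> z (\<phi> m v))" unfolding xv f'_def using mx by simp
    also have "\<dots> = f' (\<phi> z v)" using N[rule_format, OF f'z m, of v] by simp
    finally have h0: "f' (\<phi> z v) - f' v > S - e" using fx unfolding xv f'_def by simp
    define fk where "fk k = (\<lambda>y. f' ((\<phi> z ^^ k) y))" for k
    have fkS: "fk (Suc k) y = fk k (\<phi> z y)" for k y
      unfolding fk_def by (simp del: funpow.simps add: funpow_Suc_right)
    have fkc: "fk k \<in> cls" for k
    proof (induction k)
      case 0 then show ?case using f'c unfolding fk_def by simp
    next
      case (Suc k)
      have "fk (Suc k) = (\<lambda>y. fk k (\<phi> z y))" using fkS by auto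
      then show ?case using cls_comp[OF Suc z] by simp
    qed
    have claim: "fk k (\<phi> z v) - fk k v \<ge> S - K ^ k * e" for k
    proof (induction k)
      case 0 then show ?case using h0 unfolding fk_def by simp
    next
      case (Suc k)
      define h where "h = (\<lambda>y. fk k (\<phi> z y) - fk k y)"
      have hh: "harm b h" unfolding h_def
        using fkc[of k] cls_comp[OF fkc[of k] z] harm_diff unfolding cls_def by auto
      have hle: "\<forall>y. h y \<le> S" unfolding h_def using up fkc by blast
      have "h v \<ge> S - K ^ k * e" using Suc unfolding h_def by simp
      then have "h (\<phi> z v) \<ge> S - K * (K ^ k * e)"
        using KP[OF v hh hle] epos K1 by simp
      then show ?case unfolding h_def fkS by (simp add: mult.assoc)
    qed
    have tele: "f' ((\<phi> z ^^ n) v) - f' v = (\<Sum>k<n. fk k (\<phi> z v) - fk k v)"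
    proof -
      have "(\<Sum>k<n. fk k (\<phi> z v) - fk k v) = (\<Sum>k<n. f' ((\<phi> z ^^ Suc k) v) - f' ((\<phi> z ^^ k) v))"
        unfolding fk_def by (simp del: funpow.simps add: funpow_Suc_right)
      also have "\<dots> = f' ((\<phi> z ^^ n) v) - f' v"
        using sum_lessThan_telescope[of "\<lambda>k. f' ((\<phi> z ^^ k) v)" n] by simp
      finally show ?thesis by simp
    qed
    have each: "fk k (\<phi> z v) - fk k v \<ge> S / 2" if "k < n" for k
    proof -
      have "K ^ k \<le> K ^ n" using K1 that by (simp add: power_increasing)
      then have "K ^ k * e \<le> K ^ n * e" using epos by simp
      also have "K ^ n * e = S / 2"
      proof -
        have "K ^ n \<noteq> 0" using Kn by linarith
        then show ?thesis unfolding e_def by (simp add: field_simps)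
      qed
      finally show ?thesis using claim[of k] by simp
    qed
    have "real n * (S / 2) \<le> (\<Sum>k<n. fk k (\<phi> z v) - fk k v)"
      using sum_bounded_below[of "{..<n}" "S/2" "\<lambda>k. fk k (\<phi> z v) - fk k v"] each by simp
    also have "\<dots> \<le> 2" using tele cls_upper[OF f'c, of "(\<phi> z ^^ n) v" v] by linarith
    finally show False using n by simp
  qed
  then show ?thesis
  proof (intro ballI allI)
    fix f x assume "S \<le> 0" "f \<in> cls"
    then show "f (\<phi> z x) - f x \<le> 0" using up[of f x] by linarith
  qed
qed

lemma step:
  assumes N: "\<forall>f\<in>cls. \<forall>n\<in>N. \<forall>x. f (\<phi> n x) = f x"
    and z: "z \<in> carrier G"
    and com: "\<forall>g\<in>carrier G. \<exists>n\<in>N. \<forall>x. \<phi> z (\<phi> g x) = \<phi> g (\<phi> z (\<phi> n x))"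
  shows "\<forall>f\<in>cls. \<forall>x. f (\<phi> z x) = f x"
proof (intro ballI allI)
  fix f x assume f: "f \<in> cls"
  have "f (\<phi> z x) - f x \<le> 0" using step_le[OF assms] f by blast
  moreover have "- f (\<phi> z x) - (- f x) \<le> 0" using step_le[OF assms, rule_format, OF cls_neg[OF f], of x] by simp
  ultimately show "f (\<phi> z x) = f x" by simp
qed


lemma lc_sub: "subgroup (lower_central G k) G"
proof (induction k)
  case 0
  then show ?case using group.subgroup_self[OF grp] by simp
next
  case (Suc k)
  interpret G: group G by (rule grp)
  have sub: "lower_central G k \<subseteq> carrier G" by (rule subgroup.subset[OF Suc])
  have "(\<Union>a \<in> lower_central G k. \<Union>c \<in> carrier G.
        { a \<otimes>\<^bsub>G\<^esub> c \<otimes>\<^bsub>G\<^esub> inv\<^bsub>G\<^esub> a \<otimes>\<^bsub>G\<^esub> inv\<^bsub>G\<^esub> c }) \<subseteq> carrier G"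
    using sub by (auto intro!: G.m_closed G.inv_closed)
  then show ?case by (simp add: G.generate_is_subgroup)
qed

lemma allinv:
  assumes lc: "lower_central G m = {\<one>\<^bsub>G\<^esub>}"
  shows "\<forall>f\<in>cls. \<forall>g\<in>carrier G. \<forall>x. f (\<phi> g x) = f x"
proof -
  interpret G: group G by (rule grp)
  have c1: "a \<otimes>\<^bsub>G\<^esub> (inv\<^bsub>G\<^esub> a \<otimes>\<^bsub>G\<^esub> w) = w" if "a \<in> carrier G" "w \<in> carrier G" for a w
    using that by (simp add: G.m_assoc[symmetric])
  have "\<forall>f\<in>cls. \<forall>a\<in>lower_central G k. \<forall>x. f (\<phi> a x) = f x" if "k \<le> m" for k
    using that
  proof (induction k rule: inc_induct)
    case base
    show ?case using lc phi_one by simp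
  next
    case (step n)
    have IH: "\<forall>f\<in>cls. \<forall>a\<in>lower_central G (Suc n). \<forall>x. f (\<phi> a x) = f x" by (rule step(3))
    show ?case
    proof (intro ballI)
      fix f z assume f: "f \<in> cls" and z: "z \<in> lower_central G n"
      have zc: "z \<in> carrier G" by (rule subgroup.mem_carrier[OF lc_sub z])
      have iz: "inv\<^bsub>G\<^esub> z \<in> lower_central G n" by (rule subgroup.m_inv_closed[OF lc_sub z])
      have com: "\<forall>g\<in>carrier G. \<exists>n'\<in>lower_central G (Suc n). \<forall>x. \<phi> z (\<phi> g x) = \<phi> g (\<phi> z (\<phi> n' x))"
      proof
        fix g assume g: "g \<in> carrier G"
        define n' where "n' = inv\<^bsub>G\<^esub> z \<otimes>\<^bsub>G\<^esub> inv\<^bsub>G\<^esub> g \<otimes>\<^bsub>G\<^esub> z \<otimes>\<^bsub>G\<^esub> g"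
        have "inv\<^bsub>G\<^esub> z \<otimes>\<^bsub>G\<^esub> inv\<^bsub>G\<^esub> g \<otimes>\<^bsub>G\<^esub> inv\<^bsub>G\<^esub> (inv\<^bsub>G\<^esub> z) \<otimes>\<^bsub>G\<^esub> inv\<^bsub>G\<^esub> (inv\<^bsub>G\<^esub> g)
           \<in> (\<Union>a \<in> lower_central G n. \<Union>c \<in> carrier G.
              { a \<otimes>\<^bsub>G\<^esub> c \<otimes>\<^bsub>G\<^esub> inv\<^bsub>G\<^esub> a \<otimes>\<^bsub>G\<^esub> inv\<^bsub>G\<^esub> c })"
          using iz g by (intro UN_I[of "inv\<^bsub>G\<^esub> z"] UN_I[of "inv\<^bsub>G\<^esub> g"]) auto
        then have "n' \<in> (\<Union>a \<in> lower_central G n. \<Union>c \<in> carrier G.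
              { a \<otimes>\<^bsub>G\<^esub> c \<otimes>\<^bsub>G\<^esub> inv\<^bsub>G\<^esub> a \<otimes>\<^bsub>G\<^esub> inv\<^bsub>G\<^esub> c })"
          unfolding n'_def using zc g by simp
        then have n'in: "n' \<in> lower_central G (Suc n)" by (simp add: generate.incl)
        have n'c: "n' \<in> carrier G" unfolding n'_def using zc g by simp
        have eq: "z \<otimes>\<^bsub>G\<^esub> g = g \<otimes>\<^bsub>G\<^esub> z \<otimes>\<^bsub>G\<^esub> n'"
          unfolding n'_def using zc g by (simp add: G.m_assoc c1)
        have "\<phi> z (\<phi> g x) = \<phi> g (\<phi> z (\<phi> n' x))" for x
        proof -
          have "\<phi> z (\<phi> g x) = \<phi> (z \<otimes>\<^bsub>G\<^esub> g) x" using comp zc g by simp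
          also have "\<dots> = \<phi> (g \<otimes>\<^bsub>G\<^esub> z \<otimes>\<^bsub>G\<^esub> n') x" using eq by simp
          also have "\<dots> = \<phi> (g \<otimes>\<^bsub>G\<^esub> z) (\<phi> n' x)" using comp zc g n'c by simp
          also have "\<dots> = \<phi> g (\<phi> z (\<phi> n' x))" using comp zc g by simp
          finally show ?thesis .
        qed
        then show "\<exists>n'\<in>lower_central G (Suc n). \<forall>x. \<phi> z (\<phi> g x) = \<phi> g (\<phi> z (\<phi> n' x))"
          using n'in by blast
      qed
      show "\<forall>x. f (\<phi> z x) = f x" using setting.step[OF setting_axioms IH zc com] f by blast
    qed
  qed
  then have "\<forall>f\<in>cls. \<forall>a\<in>lower_central G 0. \<forall>x. f (\<phi> a x) = f x" by blast
  then show ?thesis by simp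
qed

end


theorem corollary4:
  fixes b :: "'x::countable \<Rightarrow> 'x \<Rightarrow> real"
    and G :: "('g, 'c) monoid_scheme"
    and \<phi> :: "'g \<Rightarrow> 'x \<Rightarrow> 'x"
    and f :: "'x \<Rightarrow> real"
  assumes "is_graph b"
    and "locally_finite_graph b"
    and "connected_graph b"
    and "nilpotent_group G"
    and "group_action G UNIV \<phi>"
    and "cocompact G \<phi>"
    and "H_invariant G \<phi> b"
    and "\<exists>C. \<forall>x. \<bar>f x\<bar> \<le> C"
    and "f \<in> H_dom b"
    and "H_op b f = (\<lambda>x. 0)"
  shows "\<exists>c. \<forall>x. f x = c"
proof -
  have grp: "group G" using assms(4) unfolding nilpotent_group_def by blast
  interpret S: setting b G \<phi> by (rule setting.intro[OF assms(1-3) grp assms(5-7)])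
  obtain m where lc: "lower_central G m = {\<one>\<^bsub>G\<^esub>}" using assms(4) unfolding nilpotent_group_def by blast
  obtain C where C: "\<forall>x. \<bar>f x\<bar> \<le> C" using assms(8) by blast
  define c where "c = \<bar>C\<bar> + 1"
  have cpos: "c > 0" unfolding c_def by simp
  have hf: "harm b f" using S.harm_iff assms(10) by simp
  define f1 where "f1 = (\<lambda>x. (1 / c) * f x)"
  have "harm b f1" unfolding f1_def by (rule harm_scale[OF hf])
  moreover have "\<bar>f1 x\<bar> \<le> 1" for x
  proof -
    have "\<bar>f x\<bar> \<le> c" using C[rule_format, of x] unfolding c_def by simp
    then show ?thesis unfolding f1_def using cpos by (simp add: abs_mult divide_le_eq_1)
  qed
  ultimately have f1c: "f1 \<in> S.cls" unfolding S.cls_def by simp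
  have finv: "f (\<phi> g x) = f x" if "g \<in> carrier G" for g x
  proof -
    have "f1 (\<phi> g x) = f1 x" using S.allinv[OF lc] f1c that by blast
    then show ?thesis unfolding f1_def using cpos by simp
  qed
  obtain V where Vfin: "finite V" and VU: "(\<Union>g \<in> carrier G. \<phi> g ` V) = UNIV"
    using assms(6) unfolding cocompact_def by blast
  have Vne: "V \<noteq> {}" using VU by auto
  define M where "M = Max (f ` V)"
  have le: "f x \<le> M" for x
  proof -
    have "x \<in> (\<Union>g \<in> carrier G. \<phi> g ` V)" using VU by simp
    then obtain g v where g: "g \<in> carrier G" and v: "v \<in> V" and xv: "x = \<phi> g v" by blast
    have "f x = f v" using finv[OF g] xv by simp
    also have "\<dots> \<le> M" unfolding M_def using Vfin v by simp
    finally show ?thesis .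
  qed
  obtain v0 where v0: "v0 \<in> V" "f v0 = M"
  proof -
    have "M \<in> f ` V" unfolding M_def using Vfin Vne by simp
    then show ?thesis using that by blast
  qed
  have "f x = M" for x
  proof -
    have "(\<lambda>u v. b u v > 0)\<^sup>*\<^sup>* v0 x" using assms(3) unfolding connected_graph_def by blast
    then show ?thesis
    proof (induction rule: rtranclp_induct)
      case base then show ?case using v0 by simp
    next
      case (step u w)
      have "f w \<ge> M - ((\<Sum>y\<in>{y. 0 < b u y}. b u y) / b u w) * 0"
        by (rule prop1[OF assms(1,2) hf]) (use le step in auto)
      then show ?case using le[of w] by simp
    qed
  qed
  then show ?thesis by blast
qed

end
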